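(* $\mathfrak{ss}_e=\mathfrak{ss}_l^{\{0\}}$ and $\mathfrak{ss}_e^\perp=(\mathfrak{ss}_l^{\{0\}})^\perp$.
   Context: Let $\mathfrak S_{cc}$ be the set of all sequences $\mathbf a=\langle a_i:i\in\omega\rangle$ of rational numbers with $a_i\to0$ such that $\sum_i a_i$ is conditionally convergent (converges to a real number, with the positive terms summing to $+\infty$ and the negative terms to $-\infty$). Let $[\omega]^\omega_\omega$ be the set of infinite coinfinite subsets of $\omega$; for such $X$ with increasing enumeration $\langle i_n\rangle$, $\sum_X\mathbf a$ denotes $\sum_n a_{i_n}$. For $A\subseteq\mathbb R$: $\mathfrak{ss}_l^A$ is the least cardinality of $\mathcal X\subseteq[\omega]^\omega_\omega$ such that every $\mathbf a\in\mathfrak S_{cc}$ has some $X\in\mathcal X$ for which $\sum_X\mathbf a$ converges to a limit in $A$; $(\mathfrak{ss}_l^A)^\perp$ is the least cardinality of $\mathcal A\subseteq\mathfrak S_{cc}$ such that no $X\in[\omega]^\omega_\omega$ has $\sum_X\mathbf a$ converging to a limit in $A$ for all $\mathbf a\in\mathcal A$. $\mathfrak{ss}_e$ is the least cardinality of $\mathcal X\subseteq[\omega]^\omega_\omega$ such that every $\mathbf a\in\mathfrak S_{cc}$ has some $X\in\mathcal X$ for which $\sum_X\mathbf a$ converges to the same limit as $\sum\mathbf a$; $\mathfrak{ss}_e^\perp$ is the least cardinality of $\mathcal A\subseteq\mathfrak S_{cc}$ such that no $X\in[\omega]^\omega_\omega$ has $\sum_X\mathbf a=\sum\mathbf a$ for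 all $\mathbf a\in\mathcal A$. *)

theory Defs
  imports "HOL-Analysis.Analysis" "HOL-Library.Infinite_Set"
begin

definition S_cc :: "(nat \<Rightarrow> rat) set" where
  "S_cc = {a. (\<lambda>n. real_of_rat (a n)) \<longlonglongrightarrow> 0
            \<and> summable (\<lambda>n. real_of_rat (a n))
            \<and> \<not> summable (\<lambda>n. max 0 (real_of_rat (a n)))
            \<and> \<not> summable (\<lambda>n. min 0 (real_of_rat (a n)))}"

definition inf_coinf :: "nat set set" where
  "inf_coinf = {X. infinite X \<and> infinite (UNIV - X)}"

definition subseq_along :: "(nat \<Rightarrow> rat) \<Rightarrow> nat set \<Rightarrow> nat \<Rightarrow> real" where
  "subseq_along a X = (\<lambda>n. real_of_rat (a (enumerate X n)))"

definition conv_in :: "real set \<Rightarrow> (nat \<Rightarrow> rat) \<Rightarrow> nat set \<Rightarrow> bool" where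
  "conv_in A a X \<longleftrightarrow> (\<exists>s\<in>A. subseq_along a X sums s)"

definition conv_eq :: "(nat \<Rightarrow> rat) \<Rightarrow> nat set \<Rightarrow> bool" where
  "conv_eq a X \<longleftrightarrow> subseq_along a X sums (\<Sum>n. real_of_rat (a n))"

text \<open>Witness families for ss_l^A, (ss_l^A)^perp, ss_e, ss_e^perp.\<close>
definition ssl_family :: "real set \<Rightarrow> nat set set \<Rightarrow> bool" where
  "ssl_family A \<X> \<longleftrightarrow> \<X> \<subseteq> inf_coinf \<and> (\<forall>a\<in>S_cc. \<exists>X\<in>\<X>. conv_in A a X)"

definition ssl_perp_family :: "real set \<Rightarrow> (nat \<Rightarrow> rat) set \<Rightarrow> bool" where
  "ssl_perp_family A \<A> \<longleftrightarrow> \<A> \<subseteq> S_cc \<and> \<not> (\<exists>X\<in>inf_coinf. \<forall>a\<in>\<A>. conv_in A a X)"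

definition sse_family :: "nat set set \<Rightarrow> bool" where
  "sse_family \<X> \<longleftrightarrow> \<X> \<subseteq> inf_coinf \<and> (\<forall>a\<in>S_cc. \<exists>X\<in>\<X>. conv_eq a X)"

definition sse_perp_family :: "(nat \<Rightarrow> rat) set \<Rightarrow> bool" where
  "sse_perp_family \<A> \<longleftrightarrow> \<A> \<subseteq> S_cc \<and> \<not> (\<exists>X\<in>inf_coinf. \<forall>a\<in>\<A>. conv_eq a X)"

text \<open>Two classes of sets have the same least cardinality: every member of
  one class is matched by a member of the other of no larger cardinality.\<close>
definition same_min_card :: "'a set set \<Rightarrow> 'b set set \<Rightarrow> bool" where
  "same_min_card P Q \<longleftrightarrow>
     (\<forall>X\<in>P. \<exists>Y\<in>Q. (card_of Y, card_of X) \<in> ordLeq) \<and>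
     (\<forall>Y\<in>Q. \<exists>X\<in>P. (card_of X, card_of Y) \<in> ordLeq)"

end

theory Submission
  imports Defs
begin

lemma enum_sum:
  assumes X: "infinite (X::nat set)"
  shows "sum f (X \<inter> {..<enumerate X n}) = (\<Sum>i<n. f (enumerate X i))"
proof (induction n)
  case 0
  have "X \<inter> {..<enumerate X 0} = {}"
  proof (rule ccontr)
    assume "X \<inter> {..<enumerate X 0} \<noteq> {}"
    then obtain x where x: "x \<in> X" "x < enumerate X 0" by auto
    obtain m where m: "enumerate X m = x" using enumerate_Ex[OF X x(1)] by blast
    have "enumerate X 0 \<le> enumerate X m" using enumerate_mono_le_iff[OF X, of 0 m] by simp
    with x m show False by simp
  qed
  then show ?case by simp
next
  case (Suc n)
  have eq: "X \<inter> {..<enumerate X (Suc n)} = insert (enumerate X n) (X \<inter> {..<enumerate X n})"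
  proof (rule set_eqI)
    fix x
    show "x \<in> X \<inter> {..<enumerate X (Suc n)} \<longleftrightarrow> x \<in> insert (enumerate X n) (X \<inter> {..<enumerate X n})"
    proof
      assume x: "x \<in> X \<inter> {..<enumerate X (Suc n)}"
      then have xX: "x \<in> X" and xl: "x < enumerate X (Suc n)" by auto
      obtain m where m: "enumerate X m = x" using enumerate_Ex[OF X xX] by blast
      have "m < Suc n" using xl m enumerate_mono_iff[OF X, of m "Suc n"] by simp
      then have "m = n \<or> m < n" by linarith
      then show "x \<in> insert (enumerate X n) (X \<inter> {..<enumerate X n})"
      proof
        assume "m = n" then show ?thesis using m by simp
      next
        assume "m < n"
        then have "x < enumerate X n" using m enumerate_mono[OF _ X] by blast
        then show ?thesis using xX by simp
      qed
    next
      assume x: "x \<in> insert (enumerate X n) (X \<inter> {..<enumerate X n})"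
      have s1: "enumerate X n < enumerate X (Suc n)" by (rule enumerate_step[OF X])
      have s2: "enumerate X n \<in> X" by (rule enumerate_in_set[OF X])
      from x have "x = enumerate X n \<or> (x \<in> X \<and> x < enumerate X n)" by simp
      then show "x \<in> X \<inter> {..<enumerate X (Suc n)}"
      proof
        assume "x = enumerate X n" then show ?thesis using s1 s2 by simp
      next
        assume "x \<in> X \<and> x < enumerate X n" then show ?thesis using s1 by simp
      qed
    qed
  qed
  have "enumerate X n \<notin> X \<inter> {..<enumerate X n}" by simp
  then have "sum f (X \<inter> {..<enumerate X (Suc n)}) = f (enumerate X n) + sum f (X \<inter> {..<enumerate X n})"
    unfolding eq by (intro sum.insert) simp_all
  also have "\<dots> = (\<Sum>i<n. f (enumerate X i)) + f (enumerate X n)"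
    using Suc.IH by (simp only: add.commute)
  also have "\<dots> = (\<Sum>i<Suc n. f (enumerate X i))" by (simp only: sum.lessThan_Suc)
  finally show ?case .
qed

lemma subseq_sums_iff:
  fixes f :: "nat \<Rightarrow> real"
  assumes X: "infinite (X::nat set)"
  shows "((\<lambda>i. f (enumerate X i)) sums s) \<longleftrightarrow> ((\<lambda>N. sum f (X \<inter> {..<N})) \<longlonglongrightarrow> s)"
proof
  assume h: "(\<lambda>N. sum f (X \<inter> {..<N})) \<longlonglongrightarrow> s"
  have sm: "strict_mono (enumerate X)" unfolding strict_mono_def using enumerate_mono[OF _ X] by blast
  have "((\<lambda>N. sum f (X \<inter> {..<N})) \<circ> enumerate X) \<longlonglongrightarrow> s" by (rule LIMSEQ_subseq_LIMSEQ[OF h sm])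
  then show "(\<lambda>i. f (enumerate X i)) sums s"
    unfolding sums_def o_def enum_sum[OF X] .
next
  assume h: "(\<lambda>i. f (enumerate X i)) sums s"
  define g where "g N = (LEAST n. N \<le> enumerate X n)" for N
  have gex: "N \<le> enumerate X (g N)" for N
    unfolding g_def by (rule LeastI[of _ N]) (rule le_enumerate[OF X])
  have geq: "X \<inter> {..<N} = X \<inter> {..<enumerate X (g N)}" for N
  proof (rule set_eqI)
    fix x
    show "x \<in> X \<inter> {..<N} \<longleftrightarrow> x \<in> X \<inter> {..<enumerate X (g N)}"
    proof
      assume "x \<in> X \<inter> {..<N}" then show "x \<in> X \<inter> {..<enumerate X (g N)}"
        using gex[of N] by simp
    next
      assume x: "x \<in> X \<inter> {..<enumerate X (g N)}"
      then have xX: "x \<in> X" and xl: "x < enumerate X (g N)" by auto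
      obtain m where m: "enumerate X m = x" using enumerate_Ex[OF X xX] by blast
      have "m < g N" using xl m enumerate_mono_iff[OF X, of m "g N"] by simp
      then have "\<not> N \<le> enumerate X m" unfolding g_def by (rule not_less_Least)
      then show "x \<in> X \<inter> {..<N}" using m xX by simp
    qed
  qed
  have glim: "filterlim g at_top sequentially"
    unfolding filterlim_at_top
  proof (intro allI)
    fix k
    show "eventually (\<lambda>N. k \<le> g N) sequentially"
    proof (rule eventually_sequentiallyI[of "Suc (enumerate X k)"])
      fix N assume N: "Suc (enumerate X k) \<le> N"
      show "k \<le> g N"
      proof (rule ccontr)
        assume "\<not> k \<le> g N"
        then have "g N < k" by simp
        then have "enumerate X (g N) < enumerate X k" by (rule enumerate_mono[OF _ X])
        with gex[of N] N show False by simp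
      qed
    qed
  qed
  have "(\<lambda>N. (\<Sum>i<g N. f (enumerate X i))) \<longlonglongrightarrow> s"
    using filterlim_compose[OF h[unfolded sums_def] glim] .
  moreover have "sum f (X \<inter> {..<N}) = (\<Sum>i<g N. f (enumerate X i))" for N
    by (subst geq) (rule enum_sum[OF X])
  ultimately show "(\<lambda>N. sum f (X \<inter> {..<N})) \<longlonglongrightarrow> s" by presburger
qed

lemma key:
  assumes a: "a \<in> S_cc" and X: "X \<in> inf_coinf"
  shows "conv_eq a X \<longleftrightarrow> conv_in {0} a (UNIV - X)"
proof -
  define f where "f n = real_of_rat (a n)" for n
  have fs: "suminf f = (\<Sum>n. real_of_rat (a n))" by (simp add: f_def[abs_def])
  have summ: "summable f" using a unfolding S_cc_def f_def by auto
  then have P: "(\<lambda>N. sum f {..<N}) \<longlonglongrightarrow> suminf f"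
    using summable_LIMSEQ by blast
  have Xi: "infinite X" and Yi: "infinite (UNIV - X)" using X unfolding inf_coinf_def by auto
  have split: "sum f {..<N} = sum f (X \<inter> {..<N}) + sum f ((UNIV - X) \<inter> {..<N})" for N
  proof -
    have "sum f {..<N} = sum f ({..<N} \<inter> X) + sum f ({..<N} - X)"
      by (rule sum.Int_Diff) simp
    moreover have "{..<N} \<inter> X = X \<inter> {..<N}" "{..<N} - X = (UNIV - X) \<inter> {..<N}" by auto
    ultimately show ?thesis by simp
  qed
  have "conv_eq a X \<longleftrightarrow> (\<lambda>N. sum f (X \<inter> {..<N})) \<longlonglongrightarrow> suminf f"
    unfolding conv_eq_def subseq_along_def f_def[symmetric]
    using subseq_sums_iff[OF Xi, of f] by (simp add: f_def fs)
  also have "\<dots> \<longleftrightarrow> (\<lambda>N. sum f ((UNIV - X) \<inter> {..<N})) \<longlonglongrightarrow> 0"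
  proof
    assume h: "(\<lambda>N. sum f (X \<inter> {..<N})) \<longlonglongrightarrow> suminf f"
    have "(\<lambda>N. sum f {..<N} - sum f (X \<inter> {..<N})) \<longlonglongrightarrow> suminf f - suminf f"
      by (intro tendsto_diff P h)
    then show "(\<lambda>N. sum f ((UNIV - X) \<inter> {..<N})) \<longlonglongrightarrow> 0" by (simp add: split)
  next
    assume h: "(\<lambda>N. sum f ((UNIV - X) \<inter> {..<N})) \<longlonglongrightarrow> 0"
    have "(\<lambda>N. sum f {..<N} - sum f ((UNIV - X) \<inter> {..<N})) \<longlonglongrightarrow> suminf f - 0"
      by (intro tendsto_diff P h)
    then show "(\<lambda>N. sum f (X \<inter> {..<N})) \<longlonglongrightarrow> suminf f" by (simp add: split)
  qed
  also have "\<dots> \<longleftrightarrow> conv_in {0} a (UNIV - X)"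
    unfolding conv_in_def subseq_along_def
    using subseq_sums_iff[OF Yi, of f] by (simp add: f_def)
  finally show ?thesis .
qed

lemma compl_inf_coinf: "X \<in> inf_coinf \<Longrightarrow> UNIV - X \<in> inf_coinf"
  unfolding inf_coinf_def by (simp add: Diff_Diff_Int)

lemma perp_eq: "sse_perp_family A \<longleftrightarrow> ssl_perp_family {0} A"
proof -
  have "(\<exists>X\<in>inf_coinf. \<forall>a\<in>A. conv_eq a X) \<longleftrightarrow> (\<exists>X\<in>inf_coinf. \<forall>a\<in>A. conv_in {0} a X)"
    if "A \<subseteq> S_cc"
  proof
    assume "\<exists>X\<in>inf_coinf. \<forall>a\<in>A. conv_eq a X"
    then obtain X where X: "X \<in> inf_coinf" "\<forall>a\<in>A. conv_eq a X" by blast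
    have "\<forall>a\<in>A. conv_in {0} a (UNIV - X)"
    proof
      fix a assume "a \<in> A"
      then show "conv_in {0} a (UNIV - X)" using key[of a X] X that by blast
    qed
    then show "\<exists>X\<in>inf_coinf. \<forall>a\<in>A. conv_in {0} a X"
      using compl_inf_coinf[OF X(1)] by blast
  next
    assume "\<exists>X\<in>inf_coinf. \<forall>a\<in>A. conv_in {0} a X"
    then obtain X where X: "X \<in> inf_coinf" "\<forall>a\<in>A. conv_in {0} a X" by blast
    have c: "UNIV - (UNIV - X) = X" by auto
    have "\<forall>a\<in>A. conv_eq a (UNIV - X)"
    proof
      fix a assume "a \<in> A"
      then have "a \<in> S_cc" "conv_in {0} a X" using X that by blast+
      then show "conv_eq a (UNIV - X)" using key[of a "UNIV - X"] compl_inf_coinf[OF X(1)] c by simp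
    qed
    then show "\<exists>X\<in>inf_coinf. \<forall>a\<in>A. conv_eq a X"
      using compl_inf_coinf[OF X(1)] by blast
  qed
  then show ?thesis unfolding sse_perp_family_def ssl_perp_family_def by blast
qed

lemma fam1: "sse_family F \<Longrightarrow> ssl_family {0} ((\<lambda>X. UNIV - X) ` F)"
proof -
  assume h: "sse_family F"
  show ?thesis unfolding ssl_family_def
  proof
    show "(\<lambda>X. UNIV - X) ` F \<subseteq> inf_coinf" using h compl_inf_coinf unfolding sse_family_def by blast
    show "\<forall>a\<in>S_cc. \<exists>X\<in>(\<lambda>X. UNIV - X) ` F. conv_in {0} a X"
    proof
      fix a assume a: "a \<in> S_cc"
      then obtain Y where Y: "Y \<in> F" "conv_eq a Y" using h unfolding sse_family_def by blast
      then have "Y \<in> inf_coinf" using h unfolding sse_family_def by blast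
      then have "conv_in {0} a (UNIV - Y)" using key[OF a] Y by blast
      then show "\<exists>X\<in>(\<lambda>X. UNIV - X) ` F. conv_in {0} a X" using Y by blast
    qed
  qed
qed

lemma fam2: "ssl_family {0} F \<Longrightarrow> sse_family ((\<lambda>X. UNIV - X) ` F)"
proof -
  assume h: "ssl_family {0} F"
  have c: "UNIV - (UNIV - X) = X" for X :: "nat set" by auto
  show ?thesis unfolding sse_family_def
  proof
    show "(\<lambda>X. UNIV - X) ` F \<subseteq> inf_coinf" using h compl_inf_coinf unfolding ssl_family_def by blast
    show "\<forall>a\<in>S_cc. \<exists>X\<in>(\<lambda>X. UNIV - X) ` F. conv_eq a X"
    proof
      fix a assume a: "a \<in> S_cc"
      then obtain Y where Y: "Y \<in> F" "conv_in {0} a Y" using h unfolding ssl_family_def by blast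
      then have "Y \<in> inf_coinf" using h unfolding ssl_family_def by blast
      then have "conv_eq a (UNIV - Y)" using key[OF a compl_inf_coinf] Y c by metis
      then show "\<exists>X\<in>(\<lambda>X. UNIV - X) ` F. conv_eq a X" using Y by blast
    qed
  qed
qed

theorem mainTheorem8:
  shows "same_min_card (Collect sse_family) (Collect (ssl_family {0}))
       \<and> same_min_card (Collect sse_perp_family) (Collect (ssl_perp_family {0}))"
proof -
  have r: "(card_of A, card_of A) \<in> ordLeq" for A :: "'a set"
    using card_of_refl ordIso_imp_ordLeq by blast
  show ?thesis unfolding same_min_card_def
  proof (intro conjI ballI)
    fix F assume "F \<in> Collect sse_family"
    then show "\<exists>Y\<in>Collect (ssl_family {0}). (card_of Y, card_of F) \<in> ordLeq"
      using fam1[of F] card_of_image[of "\<lambda>X. UNIV - X" F] by blast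
  next
    fix F assume "F \<in> Collect (ssl_family {0})"
    then show "\<exists>Y\<in>Collect sse_family. (card_of Y, card_of F) \<in> ordLeq"
      using fam2[of F] card_of_image[of "\<lambda>X. UNIV - X" F] by blast
  next
    fix F assume "F \<in> Collect sse_perp_family"
    then show "\<exists>Y\<in>Collect (ssl_perp_family {0}). (card_of Y, card_of F) \<in> ordLeq"
      using perp_eq[of F] r[of F] by blast
  next
    fix F assume "F \<in> Collect (ssl_perp_family {0})"
    then show "\<exists>Y\<in>Collect sse_perp_family. (card_of Y, card_of F) \<in> ordLeq"
      using perp_eq[of F] r[of F] by blast
  qed
qed

end
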